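(* Let $k\ge 4$, $n=2k-1$, $\lambda\in\overline{\mathcal{U}}_{T_n}$, and let $Y=\mathrm{KN}(S_\lambda)$ with hook lengths $h_{i,j}$. Write the elements of $S_\lambda$ increasingly as $0=s_0<s_1<\cdots$ and let $z$ be the index with $s_z=n-2$. Then $h_{i+1,1}=h_{1,i+1}$ for every $0\le i\le z-1$, and $h_{1,i+1}=h_{i,1}$ for every $z+1\le i\le n-2$.
   Context: A partition of $N$ into distinct parts is a sequence $\lambda=(\lambda_1<\dots<\lambda_t)$ of positive integers with sum $N$ and $t\ge 2$, identified with its set of parts. Missing parts: $\mathcal{M}_\lambda=\{1,\dots,\lambda_t\}\setminus\lambda$. $\lambda$ is refinable if two distinct missing parts sum to a part of $\lambda$, unrefinable otherwise; $\mathcal{U}_N$ is the set of unrefinable partitions of $N$. An element of $\mathcal{U}_N$ is maximal if its largest part is the maximum of the largest parts of elements of $\mathcal{U}_N$; $\widetilde{\mathcal{U}}_N$ is the set of these and $\overline{\mathcal{U}}_N=\{\lambda\in\widetilde{\mathcal{U}}_N:\#\mathcal{M}_\lambda=\lfloor\lambda_t/2\rfloor\}$. $T_n=n(n+1)/2$. For $\lambda\in\overline{\mathcal{U}}_{T_n}$ (with $n=2k-1$, $k\ge 4$) one knows $\lambda_t=2n-4$, $t=n-2$ and $n-2\notin\lambda$. $S_\lambda=\mathbb{N}_0\setminus\lambda$. The Keith–Nath transformation sends a set $S\subseteq\mathbb{N}_0$ with $0\in S$ and finite complement to the Young diagram $\mathrm{KN}(S)$ whose boundary is the lattice path that, starting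 at the origin, takes for $j=0,1,\dots,\max(\mathbb{N}_0\setminus S)$ an east step if $j\in S$ and a north step otherwise. Diagrams are in English convention; $h_{i,j}$ is the hook length of the cell in row $i$ (from the top) and column $j$ (from the left): (cells to its right in its row) + (cells below it in its column) + 1. *)

theory Defs
  imports Main
begin

definition distinct_partition :: "nat \<Rightarrow> nat set \<Rightarrow> bool" where
  "distinct_partition N P \<longleftrightarrow> finite P \<and> 0 \<notin> P \<and> \<Sum>P = N \<and> card P \<ge> 2"

definition missing_parts :: "nat set \<Rightarrow> nat set" where
  "missing_parts P = {1..Max P} - P"

definition refinable :: "nat set \<Rightarrow> bool" where
  "refinable P \<longleftrightarrow> (\<exists>a b. a \<in> missing_parts P \<and> b \<in> missing_parts P \<and> a \<noteq> b \<and> a + b \<in> P)"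

definition unrefinable_set :: "nat \<Rightarrow> nat set set" where
  "unrefinable_set N = {P. distinct_partition N P \<and> \<not> refinable P}"

definition maximal_unrefinable :: "nat \<Rightarrow> nat set set" where
  "maximal_unrefinable N =
     {P \<in> unrefinable_set N. Max P = Max (Max ` unrefinable_set N)}"

definition Ubar :: "nat \<Rightarrow> nat set set" where
  "Ubar N = {P \<in> maximal_unrefinable N. card (missing_parts P) = Max P div 2}"

definition tri :: "nat \<Rightarrow> nat" where
  "tri n = n * (n + 1) div 2"

text \<open>The lattice path takes, for j = 0..max gap, an east step
 if j \<in> S and a north step otherwise. The north step at a gap g lies at x-coordinate
 #{s \<in> S. s < g} and between heights #{gaps < g} and #{gaps < g}+1. The Young diagram is the
 region to the upper left of the path inside the bounding box; in English convention with
 1-based (row from top, column from left) coordinates, the row produced by gap g is row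
 (#gaps - #{gaps < g}) and it has #{s \<in> S. s < g} cells.\<close>
definition KN :: "nat set \<Rightarrow> (nat \<times> nat) set" where
  "KN S = {(i, j). \<exists>g. g \<notin> S \<and>
              i = card (UNIV - S) - card {g'. g' \<notin> S \<and> g' < g} \<and>
              1 \<le> j \<and> j \<le> card {s \<in> S. s < g}}"

definition hook :: "(nat \<times> nat) set \<Rightarrow> nat \<Rightarrow> nat \<Rightarrow> nat" where
  "hook D i j = card {j'. j' > j \<and> (i, j') \<in> D} + card {i'. i' > i \<and> (i', j) \<in> D} + 1"

end

theory Submission
  imports Defs
begin


lemma rank_fin: "finite {x\<in>A. x < (b::nat)}"
  by (rule finite_subset[of _ "{..<b}"]) auto

lemma rank_strict: "(a::nat) \<in> A \<Longrightarrow> a < b \<Longrightarrow> card {x\<in>A. x<a} < card {x\<in>A. x<b}"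
proof -
  assume h: "a \<in> A" "a < b"
  have "{x\<in>A. x<a} \<subseteq> {x\<in>A. x<b}" using h by auto
  moreover have "a \<in> {x\<in>A. x<b}" "a \<notin> {x\<in>A. x<a}" using h by auto
  ultimately have "{x\<in>A. x<a} \<subset> {x\<in>A. x<b}" by blast
  then show ?thesis by (rule psubset_card_mono[OF rank_fin])
qed

lemma rank_mono: "(a::nat) \<le> b \<Longrightarrow> card {x\<in>A. x<a} \<le> card {x\<in>A. x<b}"
  by (rule card_mono[OF rank_fin]) auto

lemma rank_inj: "(a::nat) \<in> A \<Longrightarrow> b \<in> A \<Longrightarrow> card {x\<in>A. x<a} = card {x\<in>A. x<b} \<Longrightarrow> a = b"
proof (rule ccontr)
  assume a: "a \<in> A" "b \<in> A" "card {x\<in>A. x<a} = card {x\<in>A. x<b}" "a \<noteq> b"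
  show False
  proof (cases "a < b")
    case True
    then show False using rank_strict[of a A b] a by simp
  next
    case False
    then have "b < a" using a(4) by simp
    then show False using rank_strict[of b A a] a by simp
  qed
qed

lemma rank_lt_card: "finite A \<Longrightarrow> (a::nat) \<in> A \<Longrightarrow> card {x\<in>A. x<a} < card A"
proof -
  assume h: "finite A" "a \<in> A"
  have "{x\<in>A. x<a} \<subset> A" using h by blast
  then show ?thesis by (rule psubset_card_mono[OF h(1)])
qed

lemma rank_surj: assumes "finite A" "i < card (A::nat set)" shows "\<exists>a\<in>A. card {x\<in>A. x<a} = i"
proof -
  define f where "f a = card {x\<in>A. x<a}" for a
  have inj: "inj_on f A"
  proof (rule inj_onI)
    fix a b assume "a \<in> A" "b \<in> A" "f a = f b"
    then show "a = b" unfolding f_def by (rule rank_inj)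
  qed
  have sub: "f ` A \<subseteq> {..<card A}"
  proof
    fix y assume "y \<in> f ` A"
    then obtain a where "a \<in> A" "y = f a" by blast
    then show "y \<in> {..<card A}" unfolding f_def using rank_lt_card[OF assms(1)] by simp
  qed
  have c: "card (f ` A) = card {..<card A}" using card_image[OF inj] by simp
  have "f ` A = {..<card A}" by (rule card_subset_eq[OF finite_lessThan sub c])
  then have "i \<in> f ` A" using assms(2) by simp
  then show ?thesis unfolding f_def by blast
qed

lemma fin_lt: "finite {x::nat. P x \<and> x < g}"
  by (rule finite_subset[of _ "{..<g}"]) auto

lemma card_lt_split: "card {x. x \<notin> (L::nat set) \<and> x < g} + card {x\<in>L. x < g} = g"
proof -
  have f1: "finite {x. x \<notin> L \<and> x < g}" by (rule fin_lt)
  have f2: "finite {x\<in>L. x < g}" by (rule fin_lt)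
  have "card {x. x \<notin> L \<and> x < g} + card {x\<in>L. x < g} = card ({x. x \<notin> L \<and> x < g} \<union> {x\<in>L. x < g})"
    by (rule card_Un_disjoint[symmetric, OF f1 f2]) blast
  also have "{x. x \<notin> L \<and> x < g} \<union> {x\<in>L. x < g} = {..<g}" by auto
  finally show ?thesis by simp
qed

lemma card_between_split: "card {x. x \<notin> (L::nat set) \<and> a < x \<and> x < b} + card {x\<in>L. a < x \<and> x < b} = b - Suc a"
proof -
  have f1: "finite {x. x \<notin> L \<and> a < x \<and> x < b}" by (rule finite_subset[of _ "{..<b}"]) auto
  have f2: "finite {x\<in>L. a < x \<and> x < b}" by (rule finite_subset[of _ "{..<b}"]) auto
  have "card {x. x \<notin> L \<and> a < x \<and> x < b} + card {x\<in>L. a < x \<and> x < b} = card ({x. x \<notin> L \<and> a < x \<and> x < b} \<union> {x\<in>L. a < x \<and> x < b})"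
    by (rule card_Un_disjoint[symmetric, OF f1 f2]) blast
  also have "{x. x \<notin> L \<and> a < x \<and> x < b} \<union> {x\<in>L. a < x \<and> x < b} = {a<..<b}" by auto
  finally show ?thesis by (simp only: card_greaterThanLessThan)
qed

lemma KN_eq: "KN (UNIV - L) = {(i,j). \<exists>g\<in>L. i = card L - card {g'\<in>L. g'<g} \<and> 1 \<le> j \<and> j \<le> card {s. s \<notin> L \<and> s < g}}"
proof -
  have e1: "UNIV - (UNIV - L) = L" by auto
  show ?thesis unfolding KN_def e1 by auto
qed

lemma hook_col1:
  assumes fin: "finite (L::nat set)" and z: "0 \<notin> L" and g0: "g0 \<in> L"
  shows "hook (KN (UNIV - L)) (card L - card {g\<in>L. g<g0}) 1 = g0"
proof -
  define row where "row g = card L - card {g'\<in>L. g'<g}" for g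
  define len where "len g = card {s. s \<notin> L \<and> s < g}" for g
  have Y: "KN (UNIV - L) = {(i,j). \<exists>g\<in>L. i = row g \<and> 1 \<le> j \<and> j \<le> len g}"
    unfolding KN_eq row_def len_def by simp
  have rowlt: "g \<in> L \<Longrightarrow> g' \<in> L \<Longrightarrow> row g < row g' \<longleftrightarrow> g' < g" for g g'
  proof -
    assume a: "g \<in> L" "g' \<in> L"
    have l1: "card {x\<in>L. x<g} < card L" "card {x\<in>L. x<g'} < card L" using rank_lt_card[OF fin] a by auto
    have "card {x\<in>L. x<g'} < card {x\<in>L. x<g} \<longleftrightarrow> g' < g"
      using rank_strict[of g' L g] a rank_mono[of g g' L] by (meson leI leD)
    then show ?thesis unfolding row_def using l1 by linarith
  qed
  have rowinj: "g \<in> L \<Longrightarrow> g' \<in> L \<Longrightarrow> row g = row g' \<Longrightarrow> g = g'" for g g'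
    using rowlt by (metis linorder_neqE_nat less_irrefl)
  have len1: "g \<in> L \<Longrightarrow> 1 \<le> len g" for g
  proof -
    assume "g \<in> L"
    then have "0 < g" using z by (cases g) auto
    then have "0 \<in> {s. s \<notin> L \<and> s < g}" using z by auto
    moreover have "finite {s. s \<notin> L \<and> s < g}" by (rule fin_lt)
    ultimately show ?thesis unfolding len_def
      by (metis One_nat_def Suc_leI card_gt_0_iff empty_iff)
  qed
  have A1: "{j'. j' > 1 \<and> (row g0, j') \<in> KN (UNIV - L)} = {1<..len g0}"
    unfolding Y using rowinj g0 by fastforce
  have A2: "{i'. i' > row g0 \<and> (i', 1) \<in> KN (UNIV - L)} = row ` {g\<in>L. g<g0}"
  proof (rule set_eqI, rule iffI)
    fix i' assume "i' \<in> {i'. i' > row g0 \<and> (i', 1) \<in> KN (UNIV - L)}"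
    then obtain g where "g \<in> L" "i' = row g" "row g > row g0" unfolding Y by auto
    then show "i' \<in> row ` {g\<in>L. g<g0}" using rowlt[OF g0, of g] by auto
  next
    fix i' assume "i' \<in> row ` {g\<in>L. g<g0}"
    then obtain g where g: "g \<in> L" "i' = row g" "g < g0" by auto
    then have "row g > row g0" using rowlt[OF g0, of g] by auto
    then show "i' \<in> {i'. i' > row g0 \<and> (i', 1) \<in> KN (UNIV - L)}" unfolding Y using g len1[OF g(1)] by auto
  qed
  have inj: "inj_on row {g\<in>L. g<g0}" using rowinj by (auto intro: inj_onI)
  have "hook (KN (UNIV - L)) (row g0) 1 = (len g0 - 1) + card {g\<in>L. g<g0} + 1"
    unfolding hook_def A1 A2 card_image[OF inj] by simp
  also have "\<dots> = g0" using len1[OF g0] card_lt_split[of L g0] unfolding len_def by simp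
  finally show ?thesis unfolding row_def .
qed

lemma hook_row1:
  assumes fin: "finite (L::nat set)" and z: "0 \<notin> L" and ne: "L \<noteq> {}" and s0: "s0 \<notin> L" "s0 < Max L"
  shows "hook (KN (UNIV - L)) 1 (card {s. s \<notin> L \<and> s < s0} + 1) = Max L - s0"
proof -
  define m where "m = Max L"
  define row where "row g = card L - card {g'\<in>L. g'<g}" for g
  define len where "len g = card {s. s \<notin> L \<and> s < g}" for g
  define j where "j = card {s. s \<notin> L \<and> s < s0} + 1"
  have Y: "KN (UNIV - L) = {(i,j). \<exists>g\<in>L. i = row g \<and> 1 \<le> j \<and> j \<le> len g}"
    unfolding KN_eq row_def len_def by simp
  have rowlt: "g \<in> L \<Longrightarrow> g' \<in> L \<Longrightarrow> row g < row g' \<longleftrightarrow> g' < g" for g g'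
  proof -
    assume a: "g \<in> L" "g' \<in> L"
    have l1: "card {x\<in>L. x<g} < card L" "card {x\<in>L. x<g'} < card L" using rank_lt_card[OF fin] a by auto
    have "card {x\<in>L. x<g'} < card {x\<in>L. x<g} \<longleftrightarrow> g' < g"
      using rank_strict[of g' L g] a rank_mono[of g g' L] by (meson leI leD)
    then show ?thesis unfolding row_def using l1 by linarith
  qed
  have rowinj: "g \<in> L \<Longrightarrow> g' \<in> L \<Longrightarrow> row g = row g' \<Longrightarrow> g = g'" for g g'
    using rowlt by (metis linorder_neqE_nat less_irrefl)
  have mL: "m \<in> L" unfolding m_def using fin ne by (rule Max_in)
  have gm: "g \<in> L \<Longrightarrow> g \<le> m" for g unfolding m_def using fin by (rule Max_ge)
  have e1: "{g'\<in>L. g'<m} = L - {m}" using gm mL by force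
  have cL: "card L \<ge> 1" using fin mL by (metis One_nat_def Suc_leI card_gt_0_iff empty_iff)
  have rowm: "row m = 1" unfolding row_def e1 using card_Diff_singleton[OF mL] cL by simp
  have eqS: "{s. s \<notin> L \<and> s < g} = {x\<in>UNIV-L. x<g}" for g by blast
  have lenj: "j \<le> len g \<longleftrightarrow> s0 < g" for g
  proof
    assume "j \<le> len g"
    show "s0 < g"
    proof (rule ccontr)
      assume "\<not> s0 < g"
      then have "len g \<le> card {s. s \<notin> L \<and> s < s0}" unfolding len_def eqS by (intro rank_mono) simp
      then show False using \<open>j \<le> len g\<close> unfolding j_def by simp
    qed
  next
    assume "s0 < g"
    then have "card {s. s \<notin> L \<and> s < s0} < len g" unfolding len_def eqS
      by (intro rank_strict) (use s0 in simp_all)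
    then show "j \<le> len g" unfolding j_def by simp
  qed
  have B1: "{j'. j' > j \<and> (1, j') \<in> KN (UNIV - L)} = {j<..len m}"
  proof (rule set_eqI, rule iffI)
    fix x assume "x \<in> {j'. j' > j \<and> (1, j') \<in> KN (UNIV - L)}"
    then obtain g where g: "g \<in> L" "1 = row g" "x \<le> len g" "x > j" unfolding Y by auto
    then have "g = m" using rowinj[OF g(1) mL] rowm by simp
    then show "x \<in> {j<..len m}" using g by simp
  next
    fix x assume "x \<in> {j<..len m}"
    then show "x \<in> {j'. j' > j \<and> (1, j') \<in> KN (UNIV - L)}" unfolding Y using mL rowm by (auto intro!: bexI[of _ m])
  qed
  have B2: "{i'. i' > 1 \<and> (i', j) \<in> KN (UNIV - L)} = row ` {g\<in>L. s0 < g \<and> g < m}"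
  proof (rule set_eqI, rule iffI)
    fix x assume "x \<in> {i'. i' > 1 \<and> (i', j) \<in> KN (UNIV - L)}"
    then obtain g where g: "g \<in> L" "x = row g" "j \<le> len g" "x > 1" unfolding Y by auto
    have "g < m" using rowlt[OF mL g(1)] rowm g by simp
    then show "x \<in> row ` {g\<in>L. s0 < g \<and> g < m}" using g lenj by auto
  next
    fix x assume "x \<in> row ` {g\<in>L. s0 < g \<and> g < m}"
    then obtain g where g: "g \<in> L" "x = row g" "s0 < g" "g < m" by auto
    have "1 < row g" using rowlt[OF mL g(1)] rowm g by simp
    moreover have "j \<le> len g" using lenj g by simp
    ultimately show "x \<in> {i'. i' > 1 \<and> (i', j) \<in> KN (UNIV - L)}" unfolding Y using g j_def by auto
  qed
  have inj: "inj_on row {g\<in>L. s0 < g \<and> g < m}" using rowinj by (auto intro: inj_onI)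
  have h: "hook (KN (UNIV - L)) 1 j = (len m - j) + card {g\<in>L. s0 < g \<and> g < m} + 1"
    unfolding hook_def B1 B2 card_image[OF inj] by simp
  have f1: "finite {s. s \<notin> L \<and> s < s0}" by (rule fin_lt)
  have f2: "finite {s. s \<notin> L \<and> s0 \<le> s \<and> s < m}" using fin_lt[of "\<lambda>s. s \<notin> L \<and> s0 \<le> s" m] by (simp add: conj_assoc)
  have f3: "finite {s. s \<notin> L \<and> s0 < s \<and> s < m}" using fin_lt[of "\<lambda>s. s \<notin> L \<and> s0 < s" m] by (simp add: conj_assoc)
  have u1: "{s. s \<notin> L \<and> s < m} = {s. s \<notin> L \<and> s < s0} \<union> {s. s \<notin> L \<and> s0 \<le> s \<and> s < m}"
    using s0 unfolding m_def by auto
  have u2: "{s. s \<notin> L \<and> s0 \<le> s \<and> s < m} = insert s0 {s. s \<notin> L \<and> s0 < s \<and> s < m}"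
    using s0 unfolding m_def by auto
  have "len m = card {s. s \<notin> L \<and> s < s0} + card {s. s \<notin> L \<and> s0 \<le> s \<and> s < m}"
    unfolding len_def u1 by (rule card_Un_disjoint[OF f1 f2]) auto
  also have "card {s. s \<notin> L \<and> s0 \<le> s \<and> s < m} = card {s. s \<notin> L \<and> s0 < s \<and> s < m} + 1"
    unfolding u2 using f3 by simp
  finally have lm: "len m = j + card {s. s \<notin> L \<and> s0 < s \<and> s < m}" unfolding j_def by simp
  have "s0 < m" using s0 m_def by simp
  then have "hook (KN (UNIV - L)) 1 j = m - s0"
    unfolding h lm using card_between_split[of L s0 m] by simp
  then show ?thesis unfolding j_def m_def .
qed



lemma two_tri: "2 * tri n = n * (n + 1)"
  unfolding tri_def by simp

lemma gauss1: "2 * (\<Sum>x\<in>{1..P}. x) = P * (P + 1::nat)"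
  by (induction P) simp_all

lemma finite_unref: "finite (unrefinable_set N)"
proof (rule finite_subset[of _ "Pow {..N}"])
  show "unrefinable_set N \<subseteq> Pow {..N}"
  proof
    fix P assume "P \<in> unrefinable_set N"
    then have f: "finite P" and s: "\<Sum>P = N" unfolding unrefinable_set_def distinct_partition_def by auto
    have "x \<le> N" if "x \<in> P" for x using member_le_sum[of x P id] f that s by simp
    then show "P \<in> Pow {..N}" by auto
  qed
qed simp

lemma P0_unref:
  assumes n7: "n \<ge> (7::nat)"
  shows "{1..n-3} \<union> {n+1, 2*n-4} \<in> unrefinable_set (tri n)" and "Max ({1..n-3} \<union> {n+1, 2*n-4}) = 2*n-4"
proof -
  define P0 where "P0 = {1..n-3} \<union> {n+1, 2*n-4}"
  have f: "finite P0" unfolding P0_def by simp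
  have z: "0 \<notin> P0" unfolding P0_def using n7 by auto
  have c2: "card P0 \<ge> 2"
  proof -
    have "{n+1, 2*n-4} \<subseteq> P0" unfolding P0_def by auto
    then have "card {n+1, 2*n-4} \<le> card P0" using f by (rule card_mono[rotated])
    moreover have "card {n+1, 2*n-4} = 2" using n7 by simp
    ultimately show ?thesis by simp
  qed
  have s: "\<Sum>P0 = tri n"
  proof -
    have d: "{1..n-3} \<inter> {n+1, 2*n-4} = {}" using n7 by auto
    have "\<Sum>P0 = (\<Sum>x\<in>{1..n-3}. x) + \<Sum>{n+1, 2*n-4}"
      unfolding P0_def by (rule sum.union_disjoint) (use d in auto)
    also have "\<Sum>{n+1, 2*n-4} = (n+1) + (2*n-4)" using n7 by simp
    finally have e: "2 * \<Sum>P0 = (n-3)*(n-3+1) + 2*((n+1) + (2*n-4))" using gauss1[of "n-3"] by simp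
    obtain q where q: "n = q + 3" using n7 by (metis add.commute le_Suc_ex add_leD1 numeral_le_iff semiring_norm(68) semiring_norm(69) numeral_3_eq_3 le_add_diff_inverse2 numeral_Bit1 one_le_numeral)
    have "2 * \<Sum>P0 = 2 * tri n" unfolding e two_tri unfolding q by (simp add: algebra_simps)
    then show ?thesis by simp
  qed
  have mx: "Max P0 = 2*n-4"
  proof (rule Max_eqI[OF f])
    show "y \<le> 2*n-4" if "y \<in> P0" for y using that n7 unfolding P0_def by auto
    show "2*n-4 \<in> P0" unfolding P0_def by simp
  qed
  have nr: "\<not> refinable P0"
  proof
    assume "refinable P0"
    then obtain a b where ab: "a \<in> missing_parts P0" "b \<in> missing_parts P0" "a \<noteq> b" "a + b \<in> P0"
      unfolding refinable_def by blast
    have "a \<ge> 1" "a \<notin> {1..n-3}" "b \<ge> 1" "b \<notin> {1..n-3}" using ab(1,2) unfolding missing_parts_def P0_def by auto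
    then have "a \<ge> n - 2" "b \<ge> n - 2" by auto
    moreover have "a + b \<le> 2*n-4" using ab(4) mx Max_ge[OF f] by metis
    ultimately show False using ab(3) n7 by linarith
  qed
  show "P0 \<in> unrefinable_set (tri n)" unfolding unrefinable_set_def distinct_partition_def using f z c2 s nr by simp
  show "Max P0 = 2*n-4" by (rule mx)
qed

lemma pair_struct:
  assumes fin: "finite L" and z: "0 \<notin> L" and ne: "L \<noteq> {}" and nr: "\<not> refinable L"
    and cm: "card (missing_parts L) = Max L div 2"
  defines "h \<equiv> \<lambda>x. if x \<in> L then x else Max L - x"
  shows "inj_on h {1..(Max L - 1) div 2}" "h ` {1..(Max L - 1) div 2} = L - {Max L}"
    "card L = Max L - Max L div 2"
proof -
  define m where "m = Max L"
  define P where "P = (m - 1) div 2"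
  have mL: "m \<in> L" unfolding m_def using fin ne by (rule Max_in)
  have gm: "g \<in> L \<Longrightarrow> g \<le> m" for g unfolding m_def using fin by (rule Max_ge)
  have sub: "L \<subseteq> {1..m}" using gm z by (auto simp: Suc_le_eq intro: gr0I)
  have "card (missing_parts L) = m - card L" unfolding missing_parts_def m_def[symmetric]
    using card_Diff_subset[OF fin sub] by simp
  moreover have "card L \<le> m" using card_mono[OF _ sub] by simp
  ultimately show cL: "card L = Max L - Max L div 2" using cm unfolding m_def by simp
  have m0: "m \<ge> 1" using mL z by (cases m) auto
  have hin: "h x \<in> L - {m}" if x: "x \<in> {1..P}" for x
  proof (cases "x \<in> L")
    case True
    have "x < m" using x unfolding P_def by auto
    then show ?thesis using True unfolding h_def by simp
  next
    case False
    have x1: "1 \<le> x" "2 * x \<le> m - 1" using x unfolding P_def by auto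
    have "m - x \<in> L"
    proof (rule ccontr)
      assume a: "m - x \<notin> L"
      have "x \<in> missing_parts L" "m - x \<in> missing_parts L" unfolding missing_parts_def m_def[symmetric]
        using False a x1 by auto
      moreover have "x \<noteq> m - x" "x + (m - x) \<in> L" using x1 mL by auto
      ultimately show False using nr unfolding refinable_def by blast
    qed
    then show ?thesis using False x1 unfolding h_def m_def[symmetric] by simp
  qed
  show inj: "inj_on h {1..(Max L - 1) div 2}"
  proof (rule inj_onI)
    fix x y assume x: "x \<in> {1..(Max L - 1) div 2}" and y: "y \<in> {1..(Max L - 1) div 2}" and e: "h x = h y"
    have x1: "1 \<le> x" "2 * x \<le> m - 1" "1 \<le> y" "2 * y \<le> m - 1" using x y unfolding m_def by auto
    show "x = y"
    proof (cases "x \<in> L"; cases "y \<in> L")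
    qed (use e x1 in \<open>simp_all add: h_def m_def[symmetric]\<close>)
  qed
  have "h ` {1..P} \<subseteq> L - {m}" using hin by blast
  moreover have ar: "(m - 1) div 2 = m - m div 2 - 1" using m0 by presburger
  have "card (h ` {1..P}) = card (L - {m})"
    using card_image[OF inj] card_Diff_singleton[OF mL] cL m0 ar unfolding P_def m_def[symmetric] by simp
  ultimately show "h ` {1..(Max L - 1) div 2} = L - {Max L}"
    using card_subset_eq[of "L - {m}" "h ` {1..P}"] fin unfolding P_def m_def by simp
qed

lemma Ubar_struct:
  assumes n7: "n \<ge> 7" and lam: "lam \<in> Ubar (tri n)"
  shows "finite lam" "0 \<notin> lam" "lam \<noteq> {}" "Max lam = 2*n-4" "card lam = n-2" "n-2 \<notin> lam"
        "\<And>x. x \<le> Max lam \<Longrightarrow> x \<noteq> n-2 \<Longrightarrow> (x \<in> lam \<longleftrightarrow> Max lam - x \<notin> lam)"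
proof -
  have U: "lam \<in> unrefinable_set (tri n)" and mx: "Max lam = Max (Max ` unrefinable_set (tri n))"
    and cm: "card (missing_parts lam) = Max lam div 2"
    using lam unfolding Ubar_def maximal_unrefinable_def by auto
  then have fin: "finite lam" and z: "0 \<notin> lam" and s: "\<Sum>lam = tri n" and c2: "card lam \<ge> 2"
    and nr: "\<not> refinable lam"
    unfolding unrefinable_set_def distinct_partition_def by auto
  show "finite lam" "0 \<notin> lam" by fact+
  have ne: "lam \<noteq> {}" using c2 by auto
  then show "lam \<noteq> {}" .
  define m where "m = Max lam"
  define P where "P = (m - 1) div 2"
  define h where "h = (\<lambda>x. if x \<in> lam then x else Max lam - x)"
  have inj: "inj_on h {1..P}" and img: "h ` {1..P} = lam - {m}" and cL: "card lam = m - m div 2"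
    using pair_struct[OF fin z ne nr cm] unfolding h_def P_def m_def by auto
  have mL: "m \<in> lam" unfolding m_def using fin ne by (rule Max_in)
  have lower: "2*n-4 \<le> m"
  proof -
    have "Max ({1..n-3} \<union> {n+1, 2*n-4}) \<in> Max ` unrefinable_set (tri n)"
      using P0_unref(1)[OF n7] by blast
    then have "Max ({1..n-3} \<union> {n+1, 2*n-4}) \<le> Max (Max ` unrefinable_set (tri n))"
      using finite_unref by (intro Max_ge) auto
    then show ?thesis using P0_unref(2)[OF n7] mx unfolding m_def by simp
  qed
  define d where "d x = (if x \<in> lam then 0 else m - 2*x)" for x
  define D where "D = (\<Sum>x\<in>{1..P}. d x)"
  have "\<Sum>lam = m + \<Sum>(lam - {m})" using sum.remove[OF fin mL, of id] by simp
  also have "\<Sum>(lam - {m}) = (\<Sum>x\<in>{1..P}. h x)" unfolding img[symmetric] using sum.reindex[OF inj, of id] by simp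
  also have "(\<Sum>x\<in>{1..P}. h x) = (\<Sum>x\<in>{1..P}. x + d x)"
  proof (rule sum.cong)
    fix x assume "x \<in> {1..P}"
    then have "2 * x \<le> m" unfolding P_def by auto
    then show "h x = x + d x" unfolding h_def d_def m_def[symmetric] by simp
  qed simp
  also have "\<dots> = (\<Sum>x\<in>{1..P}. x) + D" unfolding D_def by (rule sum.distrib)
  finally have "2 * tri n = 2 * m + 2 * (\<Sum>x\<in>{1..P}. x) + 2 * D" using s by simp
  then have E: "n * (n + 1) = 2 * m + P * (P + 1) + 2 * D" unfolding two_tri gauss1 .
  obtain q where q: "n = q + 2" using n7 by (metis add.commute le_add_diff_inverse2 le_trans nat_le_linear numeral_le_iff semiring_norm(68) semiring_norm(72) numeral_Bit0 numeral_Bit1 one_le_numeral add_leD2 le_add2 numeral_One)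
  have mq: "m = 2*n-4"
  proof -
    have "\<not> m \<ge> 2*n-1"
    proof
      assume a: "m \<ge> 2*n-1"
      then have "P \<ge> n - 1" unfolding P_def by auto
      then have "(n-1)*n \<le> P*(P+1)" using n7 by (intro mult_le_mono) auto
      moreover have "(n-1)*n + 2*n = n*(n+1)" unfolding q by (simp add: algebra_simps)
      ultimately show False using E a n7 by linarith
    qed
    moreover have "m \<noteq> 2*n-2"
    proof
      assume a: "m = 2*n-2"
      then have P2: "P = q" unfolding P_def q by simp
      have "even D" unfolding D_def
      proof (rule dvd_sum)
        fix x show "even (d x)" unfolding d_def a q by auto
      qed
      moreover have "n*(n+1) = 2*m + q*(q+1) + 2" unfolding a q by (simp add: algebra_simps)
      ultimately show False using E P2 by auto
    qed
    moreover have "m \<noteq> 2*n-3"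
    proof
      assume a: "m = 2*n-3"
      then have P2: "P = q" unfolding P_def q by simp
      have "n*(n+1) = 2*m + q*(q+1) + 4" unfolding a q by (simp add: algebra_simps)
      then have D2: "D = 2" using E P2 by simp
      have "D \<le> (\<Sum>x\<in>{1..q}. if x = q then 1 else 0)" unfolding D_def P2
      proof (rule sum_mono)
        fix x assume x: "x \<in> {1..q}"
        have "d x \<le> D" unfolding D_def P2 using x by (intro member_le_sum) auto
        then show "d x \<le> (if x = q then 1 else 0)" using x unfolding d_def a q D2 by (auto split: if_splits)
      qed
      also have "\<dots> = 1" using n7 q by simp
      finally show False using D2 by simp
    qed
    ultimately show ?thesis using lower by linarith
  qed
  then show mx2: "Max lam = 2*n-4" unfolding m_def .
  show cl: "card lam = n-2" using cL mq by simp
  have Pq: "P = n - 3" unfolding P_def mq using n7 by simp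
  have hv: "y \<in> {1..n-3} \<Longrightarrow> h y = (if y \<in> lam then y else m - y)" for y unfolding h_def m_def by simp
  have hin: "y \<in> {1..n-3} \<Longrightarrow> h y \<in> lam - {m}" for y using img Pq by blast
  show cnot: "n-2 \<notin> lam"
  proof
    assume "n-2 \<in> lam"
    then have "n-2 \<in> lam - {m}" using mq n7 by simp
    then obtain y where y: "y \<in> {1..n-3}" "n-2 = h y" using img Pq by blast
    show False using y hv[OF y(1)] mq n7 by (auto split: if_splits)
  qed
  have pr: "y \<in> lam \<longleftrightarrow> m - y \<notin> lam" if y: "y \<in> {1..n-3}" for y
  proof
    assume a: "y \<in> lam"
    show "m - y \<notin> lam"
    proof
      assume b: "m - y \<in> lam"
      then have "m - y \<in> lam - {m}" using y mq n7 by auto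
      then obtain y' where y': "y' \<in> {1..n-3}" "m - y = h y'" using img Pq by blast
      show False
      proof (cases "y' \<in> lam")
        case True
        then show False using y' hv[OF y'(1)] y mq n7 by auto
      next
        case False
        then have "y' = y" using y' hv[OF y'(1)] y mq n7 by auto
        then show False using False a by simp
      qed
    qed
  next
    assume "m - y \<notin> lam"
    then show "y \<in> lam" using hin[OF y] hv[OF y] by (auto split: if_splits)
  qed
  show "x \<in> lam \<longleftrightarrow> Max lam - x \<notin> lam" if x: "x \<le> Max lam" "x \<noteq> n-2" for x
  proof -
    consider "x = 0" | "x = m" | "1 \<le> x \<and> x \<le> n-3" | "n-1 \<le> x \<and> x < m"
      using x mq m_def by linarith
    then show ?thesis
    proof cases
      case 1 then show ?thesis using z mL m_def by simp
    next
      case 2 then show ?thesis using z mL m_def by simp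
    next
      case 3 then show ?thesis using pr[of x] m_def by simp
    next
      case 4
      then have y: "m - x \<in> {1..n-3}" using mq n7 by auto
      have "m - (m - x) = x" using 4 by simp
      then show ?thesis using pr[OF y] m_def by metis
    qed
  qed
qed


theorem lemma3p3:
  fixes k n :: nat and lam :: "nat set" and S :: "nat set" and Y :: "(nat \<times> nat) set" and z :: nat
  assumes "k \<ge> 4" and "n = 2 * k - 1" and "lam \<in> Ubar (tri n)"
  defines "S \<equiv> UNIV - lam"
  defines "Y \<equiv> KN S"
  defines "z \<equiv> card {s \<in> S. s < n - 2}"
  shows "(\<forall>i. i + 1 \<le> z \<longrightarrow> hook Y (i + 1) 1 = hook Y 1 (i + 1)) \<and>
         (\<forall>i. z + 1 \<le> i \<and> i \<le> n - 2 \<longrightarrow> hook Y 1 (i + 1) = hook Y i 1)"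
proof -
  have n7: "n \<ge> 7" using assms(1,2) by simp
  note st = Ubar_struct[OF n7 assms(3)]
  have fin: "finite lam" and z0: "0 \<notin> lam" and ne: "lam \<noteq> {}" using st by auto
  define m where "m = Max lam"
  define c where "c = n - 2"
  have mq: "m = 2*n-4" and cl: "card lam = n-2" and cnot: "c \<notin> lam" using st unfolding m_def c_def by auto
  have sym: "x \<le> m \<Longrightarrow> x \<noteq> c \<Longrightarrow> (x \<in> lam \<longleftrightarrow> m - x \<notin> lam)" for x using st(7) unfolding m_def c_def by blast
  have mL: "m \<in> lam" unfolding m_def using fin ne by (rule Max_in)
  have gm: "g \<in> lam \<Longrightarrow> g \<le> m" for g unfolding m_def using fin by (rule Max_ge)
  have Yeq: "Y = KN (UNIV - lam)" unfolding Y_def S_def ..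
  have zeq: "z = card {s. s \<notin> lam \<and> s < c}" unfolding z_def S_def c_def by simp
  define A where "A = {s. s \<notin> lam \<and> s < m}"
  have finA: "finite A" unfolding A_def by (rule fin_lt)
  have e1: "{g\<in>lam. g<m} = lam - {m}" using gm mL by force
  have cA: "card A = n - 1"
    using card_lt_split[of lam m] card_Diff_singleton[OF mL] cl mq n7 unfolding A_def e1 by simp
  have eqS: "{s. s \<notin> lam \<and> s < g} = {x\<in>UNIV-lam. x<g}" for g by blast
  have getS: "\<exists>s0. s0 \<notin> lam \<and> s0 < m \<and> card {s. s \<notin> lam \<and> s < s0} = i" if i: "i < n - 1" for i
  proof -
    obtain s0 where s0: "s0 \<in> A" "card {x\<in>A. x<s0} = i" using rank_surj[OF finA, of i] i cA by auto
    have "{x\<in>A. x<s0} = {s. s \<notin> lam \<and> s < s0}" using s0(1) unfolding A_def by auto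
    then show ?thesis using s0 unfolding A_def by auto
  qed
  have cardle: "card {x. x \<notin> lam \<and> x \<le> s0} = card {s. s \<notin> lam \<and> s < s0} + 1" if "s0 \<notin> lam" for s0
  proof -
    have "{x. x \<notin> lam \<and> x \<le> s0} = insert s0 {s. s \<notin> lam \<and> s < s0}" using that by auto
    then show ?thesis using fin_lt[of "\<lambda>s. s \<notin> lam" s0] by simp
  qed
  have rowidx: "card lam - card {g\<in>lam. g < m - s0} = card ({x. x \<notin> lam \<and> x \<le> s0} - {c})"
    if s0: "s0 \<notin> lam" "s0 < m" "s0 \<noteq> c" for s0
  proof -
    have f1: "finite {g\<in>lam. g < m - s0}" "finite {g\<in>lam. \<not> g < m - s0}" using fin by auto
    have "card lam = card ({g\<in>lam. g < m - s0} \<union> {g\<in>lam. \<not> g < m - s0})" by (rule arg_cong[where f=card]) blast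
    also have "\<dots> = card {g\<in>lam. g < m - s0} + card {g\<in>lam. \<not> g < m - s0}"
      by (rule card_Un_disjoint[OF f1]) blast
    finally have sp: "card lam - card {g\<in>lam. g < m - s0} = card {g\<in>lam. \<not> g < m - s0}" by simp
    have im: "{g\<in>lam. \<not> g < m - s0} = (\<lambda>x. m - x) ` ({x. x \<notin> lam \<and> x \<le> s0} - {c})"
    proof (rule set_eqI, rule iffI)
      fix g assume g: "g \<in> {g\<in>lam. \<not> g < m - s0}"
      then have gl: "g \<in> lam" "g \<le> m" "m - s0 \<le> g" using gm by auto
      have gc: "g \<noteq> c" using gl cnot by auto
      have "m - g \<noteq> c" using gc gl mq c_def by auto
      moreover have "m - (m - g) = g" using gl by simp
      ultimately have "m - g \<notin> lam" using sym[of "m - g"] gl by auto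
      moreover have "m - g \<le> s0" using gl s0 by auto
      ultimately have "m - g \<in> {x. x \<notin> lam \<and> x \<le> s0} - {c}" using \<open>m - g \<noteq> c\<close> by simp
      moreover have "g = m - (m - g)" using gl by simp
      ultimately show "g \<in> (\<lambda>x. m - x) ` ({x. x \<notin> lam \<and> x \<le> s0} - {c})" by blast
    next
      fix g assume "g \<in> (\<lambda>x. m - x) ` ({x. x \<notin> lam \<and> x \<le> s0} - {c})"
      then obtain x where x: "x \<notin> lam" "x \<le> s0" "x \<noteq> c" "g = m - x" by auto
      have "m - x \<in> lam" using sym[of x] x s0 by auto
      then show "g \<in> {g\<in>lam. \<not> g < m - s0}" using x s0 by auto
    qed
    have inj: "inj_on (\<lambda>x. m - x) ({x. x \<notin> lam \<and> x \<le> s0} - {c})"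
      by (rule inj_onI) (use s0 in auto)
    show ?thesis unfolding sp im card_image[OF inj] ..
  qed
  have hc: "hook Y (card ({x. x \<notin> lam \<and> x \<le> s0} - {c})) 1 = m - s0"
    if s0: "s0 \<notin> lam" "s0 < m" "s0 \<noteq> c" for s0
  proof -
    have "m - s0 \<in> lam" using sym[of s0] s0 by auto
    from hook_col1[OF fin z0 this] show ?thesis unfolding Yeq rowidx[OF s0] .
  qed
  have hr: "hook Y 1 (card {s. s \<notin> lam \<and> s < s0} + 1) = m - s0" if s0: "s0 \<notin> lam" "s0 < m" for s0
    unfolding Yeq m_def by (rule hook_row1[OF fin z0 ne]) (use s0 m_def in auto)
  have zc: "z \<le> c" unfolding zeq using card_mono[of "{..<c}" "{s. s \<notin> lam \<and> s < c}"] by auto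
  show ?thesis
  proof (intro conjI allI impI)
    fix i assume i: "i + 1 \<le> z"
    have "i < n - 1" using i zc c_def n7 by linarith
    then obtain s0 where s0: "s0 \<notin> lam" "s0 < m" "card {s. s \<notin> lam \<and> s < s0} = i"
      using getS[of i] by blast
    have "s0 < c"
    proof (rule ccontr)
      assume "\<not> s0 < c"
      then have "z \<le> i" unfolding zeq s0(3)[symmetric] eqS by (intro rank_mono) simp
      then show False using i by simp
    qed
    then have e: "{x. x \<notin> lam \<and> x \<le> s0} - {c} = {x. x \<notin> lam \<and> x \<le> s0}" by auto
    have "hook Y (i + 1) 1 = m - s0" using hc[OF s0(1,2)] \<open>s0 < c\<close> unfolding e cardle[OF s0(1)] s0(3) by simp
    moreover have "hook Y 1 (i + 1) = m - s0" using hr[OF s0(1,2)] unfolding s0(3) .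
    ultimately show "hook Y (i + 1) 1 = hook Y 1 (i + 1)" by simp
  next
    fix i assume i: "z + 1 \<le> i \<and> i \<le> n - 2"
    have "i < n - 1" using i n7 by linarith
    then obtain s0 where s0: "s0 \<notin> lam" "s0 < m" "card {s. s \<notin> lam \<and> s < s0} = i"
      using getS[of i] by blast
    have "\<not> s0 < c"
    proof
      assume "s0 < c"
      then have "i \<le> z" unfolding zeq s0(3)[symmetric] eqS by (intro rank_mono) simp
      then show False using i by simp
    qed
    moreover have "s0 \<noteq> c" using s0(3) zeq i by auto
    ultimately have cin: "c \<in> {x. x \<notin> lam \<and> x \<le> s0}" using cnot by auto
    have fl: "finite {x. x \<notin> lam \<and> x \<le> s0}" by (rule finite_subset[of _ "{..s0}"]) auto
    have "card ({x. x \<notin> lam \<and> x \<le> s0} - {c}) = i"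
      using card_Diff_singleton[OF cin] cardle[OF s0(1)] s0(3) by simp
    then have "hook Y i 1 = m - s0" using hc[OF s0(1,2) \<open>s0 \<noteq> c\<close>] by simp
    moreover have "hook Y 1 (i + 1) = m - s0" using hr[OF s0(1,2)] unfolding s0(3) .
    ultimately show "hook Y 1 (i + 1) = hook Y i 1" by simp
  qed
qed

end
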